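(* Let $q$ be odd, $\varepsilon=\left(\frac{-1}{q}\right)$, $\nu=\left(\frac2q\right)$, $m=(q-\varepsilon)/4$. In ${\mathbb F}_q[x]$: (i) $T_m(x)=2^{m-1}\prod\{x-b: b\in\mathcal B_1^{-\nu,-\nu}\}$ and $U_{m-1}(x)=2^{m-1}\prod\{x-b:b\in\mathcal B_1^{\nu,\nu}\}$. (ii) $U_{(q-3)/2}(x)=2^{(q-3)/2}\prod\{x-b: b\in{\mathbb F}_q,\ \left(\frac{b^2-1}{q}\right)=1\}$ and $U_{(q-1)/2}(x)=2^{(q-1)/2}\prod\{x-b: b\in{\mathbb F}_q,\ \left(\frac{b^2-1}{q}\right)=-1\}$.
   Context: Chebyshev polynomials $T_k,U_k\in\mathbb Z[x]$: $T_0=1$, $T_1=x$, $T_{k+2}=2xT_{k+1}-T_k$; $U_0=1$, $U_1=2x$, $U_{k+2}=2xU_{k+1}-U_k$. $\left(\frac{a}{q}\right)$ is the Legendre symbol on ${\mathbb F}_q$. For $\lambda\in{\mathbb F}_q^\times$, $\varepsilon_1,\varepsilon_2\in\{\pm1\}$, $\mathcal B_\lambda^{\varepsilon_1,\varepsilon_2}=\{b\in{\mathbb F}_q:\left(\frac{\lambda-b}{q}\right)=\varepsilon_1,\ \left(\frac{\lambda+b}{q}\right)=\varepsilon_2\}$. Empty products equal $1$. *)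

theory Defs
  imports "HOL-Computational_Algebra.Polynomial"
begin

text \<open>Chebyshev polynomials, defined by their integer recurrences directly over an
arbitrary commutative ring (this is the image of the integer polynomials).\<close>
fun cheb_T :: "nat \<Rightarrow> 'a::comm_ring_1 poly" where
  "cheb_T 0 = 1"
| "cheb_T (Suc 0) = [:0, 1:]"
| "cheb_T (Suc (Suc n)) = [:0, 2:] * cheb_T (Suc n) - cheb_T n"

fun cheb_U :: "nat \<Rightarrow> 'a::comm_ring_1 poly" where
  "cheb_U 0 = 1"
| "cheb_U (Suc 0) = [:0, 2:]"
| "cheb_U (Suc (Suc n)) = [:0, 2:] * cheb_U (Suc n) - cheb_U n"

definition leg :: "'a::field \<Rightarrow> int" where
  "leg a = (if a = 0 then 0 else if (\<exists>y. y ^ 2 = a) then 1 else -1)"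

definition Bset :: "'a::field \<Rightarrow> int \<Rightarrow> int \<Rightarrow> 'a set" where
  "Bset lam e1 e2 = {b. leg (lam - b) = e1 \<and> leg (lam + b) = e2}"

end

theory Submission
  imports Defs "HOL-Number_Theory.Cong"
begin


lemma ff_pow_card:
  fixes x :: "'a::{field,finite}"
  shows "x ^ card (UNIV :: 'a set) = x"
proof (cases "x = 0")
  case False
  have "x * (\<Prod>y\<in>UNIV-{0}. x * y) = x * x ^ (card (UNIV :: 'a set) - 1) * \<Prod>(UNIV-{0})"
    by (simp add: prod.distrib mult_ac)
  also have "x * x ^ (card (UNIV :: 'a set) - 1) = x ^ Suc (card (UNIV :: 'a set) - 1)"
    by (subst power_Suc) auto
  also have "Suc (card (UNIV :: 'a set) - 1) = card (UNIV :: 'a set)"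
    using finite_UNIV_card_ge_0[where ?'a = 'a] by simp
  also have "(\<Prod>y\<in>UNIV-{0}. x * y) = (\<Prod>y\<in>UNIV-{0}. y)"
    by (rule prod.reindex_bij_witness[of _ "\<lambda>y. y / x" "\<lambda>y. x * y"]) (use False in auto)
  finally show ?thesis
    by simp
qed (use finite_UNIV_card_ge_0[where ?'a = 'a] in auto)

lemma ff_pow_card_m1:
  fixes x :: "'a::{field,finite}"
  assumes "x \<noteq> 0" shows "x ^ (card (UNIV :: 'a set) - 1) = 1"
proof -
  have c: "card (UNIV :: 'a set) = Suc (card (UNIV :: 'a set) - 1)" using finite_UNIV_card_ge_0[where ?'a = 'a] by simp
  have "x * x ^ (card (UNIV :: 'a set) - 1) = x * 1" using ff_pow_card[of x] c by (metis power_Suc mult_1_right)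
  thus ?thesis using assms by simp
qed

lemma char_prime: "prime CHAR('a::{field,finite})"
  by (rule prime_CHAR_semidom) (rule finite_imp_CHAR_pos, simp)

lemma card_prime_power: "\<exists>r. card (UNIV :: 'a::{field,finite} set) = CHAR('a) ^ r"
proof -
  define p where "p = CHAR('a)"
  have pp: "prime p" unfolding p_def by (rule char_prime)
  hence p2: "p \<ge> 2" by (simp add: prime_ge_2_nat)
  have p0: "of_nat p = (0::'a)" unfolding p_def by simp
  define cl where "cl S \<longleftrightarrow> (0::'a) \<in> S \<and> (\<forall>x\<in>S. \<forall>y\<in>S. x + y \<in> S)" for S
  have mult_in: "of_nat n * x \<in> S" if "cl S" "x \<in> S" for S x n
    using that by (induction n) (auto simp: cl_def algebra_simps)
  have m1: "of_nat (p - 1) = (-1::'a)"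
  proof -
    have "of_nat p = (of_nat (Suc (p - 1)) :: 'a)" using p2 by (simp del: of_nat_Suc)
    hence "of_nat (p - 1) + 1 = (0::'a)" using p0 by (simp add: ac_simps)
    thus ?thesis by (simp add: eq_neg_iff_add_eq_0)
  qed
  have neg_in: "-x \<in> S" if "cl S" "x \<in> S" for S x
    using mult_in[OF that, of "p - 1"] m1 by simp
  have modp: "of_nat (n mod p) = (of_nat n :: 'a)" for n
    unfolding p_def by (simp add: of_nat_eq_iff_cong_CHAR cong_def)
  have inv_nat: "\<exists>k. of_nat k * of_nat d = (1::'a)" if "0 < d" "d < p" for d
  proof -
    have nz: "of_nat d \<noteq> (0::'a)" using that unfolding of_nat_eq_0_iff_char_dvd p_def[symmetric]
      by (auto dest: dvd_imp_le)
    have q2: "card (UNIV :: 'a set) \<ge> 2"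
    proof -
      have "card {0::'a, 1} = 2" by simp
      moreover have "card {0::'a, 1} \<le> card (UNIV :: 'a set)" by (rule card_mono) auto
      ultimately show ?thesis by simp
    qed
    have "of_nat (d ^ (card (UNIV :: 'a set) - 2)) * of_nat d = (of_nat d :: 'a) ^ (card (UNIV :: 'a set) - 1)"
      using q2 by (simp add: power_Suc2[symmetric] Suc_diff_Suc numeral_2_eq_2)
    also have "\<dots> = 1" using ff_pow_card_m1[OF nz] .
    finally show ?thesis by blast
  qed
  have main: "\<exists>r. card (UNIV :: 'a set) = p ^ r" if "cl S" "card S = p ^ k" for S k
    using that
  proof (induction "card (UNIV :: 'a set) - card S" arbitrary: S k rule: less_induct)
    case less
    show ?case
    proof (cases "S = UNIV")
      case True thus ?thesis using less.prems by auto
    next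
      case False
      then obtain e where e: "e \<notin> S" by auto
      define S' where "S' = (\<lambda>(s,c). s + of_nat c * e) ` (S \<times> {..<p})"
      have fin: "finite S" by simp
      have inj: "inj_on (\<lambda>(s,c). s + of_nat c * e) (S \<times> {..<p})"
      proof (rule inj_onI, clarsimp)
        fix s c s' c'
        assume s: "s \<in> S" "s' \<in> S" "c < p" "c' < p" and eq: "s + of_nat c * e = s' + of_nat c' * (e::'a)"
        have gen: "False" if "s1 \<in> S" "s2 \<in> S" "c2 < c1" "c1 < p" "s1 + of_nat c1 * e = s2 + of_nat c2 * e" for s1 s2 c1 c2
        proof -
          have "of_nat (c1 - c2) * e = s2 + - s1" using that
            by (simp add: of_nat_diff algebra_simps)
          moreover have "0 < c1 - c2" "c1 - c2 < p" using that by auto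
          moreover obtain k where k: "of_nat k * of_nat (c1 - c2) = (1::'a)" using inv_nat[OF calculation(2,3)] by blast
          ultimately have "e = of_nat k * (s2 + - s1)" by (metis mult.assoc mult_1 k)
          moreover have "s2 + - s1 \<in> S" using less.prems(1) that neg_in unfolding cl_def by blast
          ultimately have "e \<in> S" using mult_in less.prems(1) by simp
          thus False using e by simp
        qed
        show "s = s' \<and> c = c'"
        proof (cases "c = c'")
          case True thus ?thesis using eq by simp
        next
          case False
          then consider "c' < c" | "c < c'" by linarith
          thus ?thesis
            by cases (use gen[of s s' c' c] gen[of s' s c c'] s eq in auto)
        qed
      qed
      have cardS': "card S' = p ^ Suc k"
        unfolding S'_def using card_image[OF inj] less.prems by (simp add: card_cartesian_product)
      have clS': "cl S'"
        unfolding cl_def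
      proof safe
        show "0 \<in> S'" unfolding S'_def using less.prems(1) p2 unfolding cl_def
          by (auto intro!: image_eqI[of _ _ "(0, 0)"])
      next
        fix x y assume "x \<in> S'" "y \<in> S'"
        then obtain s1 c1 s2 c2 where "s1 \<in> S" "s2 \<in> S" "c1 < p" "c2 < p"
          "x = s1 + of_nat c1 * e" "y = s2 + of_nat c2 * e" unfolding S'_def by auto
        moreover have "s1 + s2 \<in> S" using calculation less.prems(1) unfolding cl_def by blast
        moreover have "(c1 + c2) mod p < p" using p2 by simp
        moreover have "x + y = (s1 + s2) + of_nat ((c1 + c2) mod p) * e"
          using calculation by (simp add: modp algebra_simps)
        ultimately show "x + y \<in> S'" unfolding S'_def by (auto intro!: image_eqI[of _ _ "(s1+s2, (c1+c2) mod p)"])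
      qed
      have "card S < card S'" using cardS' less.prems p2 by simp
      moreover have "card S' \<le> card (UNIV :: 'a set)" by (simp add: card_mono)
      ultimately have "card (UNIV :: 'a set) - card S' < card (UNIV :: 'a set) - card S" by linarith
      from less.hyps[OF this clS' cardS'] show ?thesis .
    qed
  qed
  have "cl {0}" unfolding cl_def by simp
  from main[OF this, of 0] show ?thesis unfolding p_def by simp
qed

lemma frob_poly:
  fixes x y :: "'a::{field,finite} poly"
  shows "(x + y) ^ card (UNIV::'a set) = x ^ card (UNIV::'a set) + y ^ card (UNIV::'a set)"
proof -
  obtain r where r: "card (UNIV::'a set) = CHAR('a) ^ r" using card_prime_power by blast
  have "prime CHAR('a poly)" using char_prime[where 'a='a] by simp
  moreover have "card (UNIV::'a set) = CHAR('a poly) ^ r" using r by simp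
  ultimately show ?thesis by (rule freshmans_dream')
qed

lemma frob_const:
  fixes c :: "'a::{field,finite}"
  shows "[:c:] ^ card (UNIV::'a set) = [:c:]"
  by (simp add: poly_const_pow ff_pow_card)

lemma frob_neg:
  fixes x :: "'a::{field,finite} poly"
  shows "(- x) ^ card (UNIV::'a set) = - (x ^ card (UNIV::'a set))"
proof -
  have "x ^ card (UNIV::'a set) + (- x) ^ card (UNIV::'a set) = (x + - x) ^ card (UNIV::'a set)"
    by (rule frob_poly[symmetric])
  also have "\<dots> = 0" by (simp add: finite_UNIV_card_ge_0)
  finally show ?thesis by (simp add: eq_neg_iff_add_eq_0 add.commute)
qed

lemma two_nz:
  assumes "odd (card (UNIV::'a::{field,finite} set))"
  shows "(2::'a) \<noteq> 0"
proof
  assume "(2::'a) = 0"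
  hence "of_nat 2 = (0::'a)" by simp
  hence "CHAR('a) dvd 2" by (simp only: of_nat_eq_0_iff_char_dvd)
  moreover have "CHAR('a) dvd card (UNIV::'a set)"
  proof -
    obtain r where r: "card (UNIV::'a set) = CHAR('a) ^ r" using card_prime_power by blast
    have "card {0::'a, 1} = 2" by simp
    moreover have "card {0::'a, 1} \<le> card (UNIV :: 'a set)" by (rule card_mono) auto
    ultimately have "r \<noteq> 0" using r by (cases r) auto
    thus ?thesis using r by (simp add: dvd_power)
  qed
  ultimately have "CHAR('a) dvd 1 \<or> CHAR('a) = 2"
    using char_prime[where 'a='a] by (metis dvd_refl prime_nat_iff two_is_prime_nat)
  thus False using assms char_prime[where 'a='a]
    by (metis \<open>CHAR('a) dvd card UNIV\<close> dvd_trans even_numeral not_prime_1 nat_dvd_1_iff_1)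
qed

lemma one_neq_mone:
  assumes "odd (card (UNIV::'a::{field,finite} set))"
  shows "(1::'a) \<noteq> -1"
proof
  assume "(1::'a) = -1"
  hence "(2::'a) = 0" by (metis one_add_one add_eq_0_iff_both_eq_0 eq_neg_iff_add_eq_0)
  thus False using two_nz[OF assms] by simp
qed

lemma leg_vals: "leg (a::'a::field) \<in> {-1, 0, 1}"
  by (simp add: leg_def)

lemma leg_zero_iff: "leg (a::'a::field) = 0 \<longleftrightarrow> a = 0"
  by (simp add: leg_def)

lemma of_int_inj3:
  assumes "odd (card (UNIV::'a::{field,finite} set))"
    and "x \<in> {-1,0,1}" "y \<in> {-1,0,1}" "(of_int x :: 'a) = of_int y"
  shows "x = y"
proof -
  have n: "(1::'a) \<noteq> -1" "(-1::'a) \<noteq> 1" "(0::'a) \<noteq> 1" "(1::'a)\<noteq>0" "(0::'a) \<noteq> -1" "(-1::'a) \<noteq> 0"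
    using one_neq_mone[OF assms(1)] by auto
  from assms(2,3) have "x = -1 \<or> x = 0 \<or> x = 1" "y = -1 \<or> y = 0 \<or> y = 1" by auto
  thus ?thesis using assms(4) n by auto
qed

lemma card_ge3:
  assumes "odd (card (UNIV::'a::{field,finite} set))"
  shows "card (UNIV::'a set) \<ge> 3"
proof -
  have "card {0::'a, 1} = 2" by simp
  moreover have "card {0::'a, 1} \<le> card (UNIV :: 'a set)" by (rule card_mono) auto
  ultimately show ?thesis using assms by presburger
qed

lemma euler:
  fixes a :: "'a::{field,finite}"
  assumes q: "odd (card (UNIV::'a set))"
  shows "a ^ ((card (UNIV::'a set) - 1) div 2) = of_int (leg a)"
proof -
  define q where "q = card (UNIV::'a set)"
  define k where "k = (q - 1) div 2"
  have q3: "q \<ge> 3" using card_ge3[OF q] unfolding q_def .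
  have qk: "q - 1 = 2 * k" using q unfolding k_def q_def by presburger
  have k1: "k \<ge> 1" using q3 qk by linarith
  have "a ^ k = of_int (leg a)"
  proof (cases "a = 0")
    case True
    have "a ^ k = 0" using True k1 by simp
    thus ?thesis using True by (simp add: leg_def)
  next
    case False
    show ?thesis
    proof (cases "\<exists>y. y ^ 2 = a")
      case True
      then obtain y where y: "y ^ 2 = a" by blast
      hence "y \<noteq> 0" using False by auto
      hence y0: "y \<noteq> 0" .
      have "a ^ k = y ^ (2*k)" unfolding y[symmetric] by (simp add: power_mult)
      also have "\<dots> = y ^ (q - 1)" by (metis qk)
      also have "\<dots> = 1" using ff_pow_card_m1[OF y0] q_def by simp
      finally have "a ^ k = 1" .
      thus ?thesis using False True by (simp add: leg_def)
    next
      case ns: False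
      define h where "h = a ^ k"
      have "h ^ 2 = a ^ (2 * k)" unfolding h_def by (simp add: power_mult[symmetric] mult.commute)
      also have "\<dots> = a ^ (q - 1)" by (metis qk)
      also have "\<dots> = 1" using ff_pow_card_m1[OF False] q_def by simp
      finally have "h ^ 2 = 1" .
      hence hpm: "h = 1 \<or> h = -1" by (metis power2_eq_1_iff)
      define P :: "'a poly" where "P = [:-1:] + monom 1 k"
      have degP: "degree P = k" unfolding P_def using k1 by (simp add: degree_add_eq_right degree_monom_eq)
      have P0: "P \<noteq> 0" using degP k1 by auto
      have polyP: "poly P x = x ^ k - 1" for x unfolding P_def by (simp add: poly_monom)
      define Q where "Q = (\<lambda>y. y ^ 2) ` (UNIV - {0::'a})"
      have Qroots: "Q \<subseteq> {x. poly P x = 0}"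
      proof
        fix s assume "s \<in> Q"
        then obtain y where "y \<noteq> 0" "s = y ^ 2" unfolding Q_def by auto
        thus "s \<in> {x. poly P x = 0}" using ff_pow_card_m1[of y]
          by (simp add: polyP power_mult[symmetric] qk[symmetric] q_def)
      qed
      have fib: "card {y::'a. y ^ 2 = s} \<le> 2" for s
      proof -
        have "{y::'a. y ^ 2 = s} = {x. poly [:-s, 0, 1:] x = 0}" by (auto simp: power2_eq_square)
        also have "card \<dots> \<le> degree [:-s, 0, 1::'a:]" by (rule card_poly_roots_bound) simp
        finally show ?thesis by simp
      qed
      have "UNIV - {0::'a} \<subseteq> (\<Union>s\<in>Q. {y. y ^ 2 = s})" unfolding Q_def by auto
      hence "card (UNIV - {0::'a}) \<le> card (\<Union>s\<in>Q. {y. y ^ 2 = s})" by (intro card_mono) auto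
      also have "\<dots> \<le> (\<Sum>s\<in>Q. card {y::'a. y ^ 2 = s})" by (rule card_UN_le) (simp add: Q_def)
      also have "\<dots> \<le> (\<Sum>s\<in>Q. 2)" by (rule sum_mono) (rule fib)
      finally have "q - 1 \<le> 2 * card Q" by (simp add: q_def card_Diff_singleton mult.commute)
      hence cQ: "card Q \<ge> k" using qk by linarith
      have "h \<noteq> 1"
      proof
        assume "h = 1"
        hence "insert a Q \<subseteq> {x. poly P x = 0}" using Qroots by (simp add: polyP h_def)
        hence "card (insert a Q) \<le> card {x. poly P x = 0}" by (intro card_mono) (auto intro: poly_roots_finite P0)
        also have "\<dots> \<le> k" using card_poly_roots_bound[OF P0] degP by simp
        finally have "card (insert a Q) \<le> k" .
        moreover have "a \<notin> Q" using ns unfolding Q_def by auto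
        ultimately show False using cQ by (simp add: Q_def)
      qed
      hence "h = -1" using hpm by auto
      thus ?thesis using False ns by (simp add: leg_def h_def)
    qed
  qed
  thus ?thesis by (simp add: k_def q_def)
qed

lemma leg_mult:
  fixes a b :: "'a::{field,finite}"
  assumes q: "odd (card (UNIV::'a set))"
  shows "leg (a * b) = leg a * leg b"
proof (rule of_int_inj3[OF q])
  show "leg (a*b) \<in> {-1,0,1}" by (rule leg_vals)
  show "leg a * leg b \<in> {-1,0,1}" using leg_vals[of a] leg_vals[of b] by auto
  show "(of_int (leg (a * b)) :: 'a) = of_int (leg a * leg b)"
    using euler[OF q, of "a*b"] euler[OF q, of a] euler[OF q, of b] by (simp add: power_mult_distrib)
qed



lemma mult_X2: "[:0, 2:] * p = pCons 0 (smult 2 p)"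
  by (simp add: mult_pCons_left)

lemma cheb_T_bound: "degree (cheb_T n :: 'a::comm_ring_1 poly) \<le> n \<and>
   coeff (cheb_T n :: 'a poly) n = (if n = 0 then 1 else 2 ^ (n - 1))"
proof (induction n rule: cheb_T.induct)
  case 1 thus ?case by simp
next
  case 2 thus ?case by simp
next
  case (3 n)
  have d1: "degree (pCons 0 (smult 2 (cheb_T (Suc n) :: 'a poly))) \<le> Suc (Suc n)"
    using 3(1) by (metis (no_types, lifting) Suc_le_mono degree_pCons_le degree_smult_le le_trans)
  have d2: "degree (cheb_T n :: 'a poly) \<le> Suc (Suc n)" using 3(2) by linarith
  have "degree (cheb_T (Suc (Suc n)) :: 'a poly) \<le> Suc (Suc n)"
    using degree_diff_le[OF d1 d2] by (simp add: mult_X2)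
  moreover have "coeff (cheb_T n :: 'a poly) (Suc (Suc n)) = 0"
    using 3(2) by (intro coeff_eq_0) linarith
  ultimately show ?case using 3(1) by (simp add: mult_X2)
qed

lemma cheb_U_bound: "degree (cheb_U n :: 'a::comm_ring_1 poly) \<le> n \<and>
   coeff (cheb_U n :: 'a poly) n = 2 ^ n"
proof (induction n rule: cheb_U.induct)
  case 1 thus ?case by simp
next
  case 2 thus ?case by simp
next
  case (3 n)
  have d1: "degree (pCons 0 (smult 2 (cheb_U (Suc n) :: 'a poly))) \<le> Suc (Suc n)"
    using 3(1) by (metis (no_types, lifting) Suc_le_mono degree_pCons_le degree_smult_le le_trans)
  have d2: "degree (cheb_U n :: 'a poly) \<le> Suc (Suc n)" using 3(2) by linarith
  have "degree (cheb_U (Suc (Suc n)) :: 'a poly) \<le> Suc (Suc n)"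
    using degree_diff_le[OF d1 d2] by (simp add: mult_X2)
  moreover have "coeff (cheb_U n :: 'a poly) (Suc (Suc n)) = 0"
    using 3(2) by (intro coeff_eq_0) linarith
  ultimately show ?case using 3(1) by (simp add: mult_X2)
qed

lemma cheb_T_deg:
  assumes "(2::'a::idom) \<noteq> 0" "n \<ge> 1"
  shows "degree (cheb_T n :: 'a poly) = n" "lead_coeff (cheb_T n :: 'a poly) = 2 ^ (n - 1)"
proof -
  have c: "coeff (cheb_T n :: 'a poly) n = 2 ^ (n - 1)" using cheb_T_bound[where 'a='a, of n] assms by simp
  have "coeff (cheb_T n :: 'a poly) n \<noteq> 0" using c assms by simp
  hence "n \<le> degree (cheb_T n :: 'a poly)" by (rule le_degree)
  thus d: "degree (cheb_T n :: 'a poly) = n" using cheb_T_bound[where 'a='a, of n] by linarith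
  show "lead_coeff (cheb_T n :: 'a poly) = 2 ^ (n - 1)" using c d by simp
qed

lemma cheb_U_deg:
  assumes "(2::'a::idom) \<noteq> 0"
  shows "degree (cheb_U n :: 'a poly) = n" "lead_coeff (cheb_U n :: 'a poly) = 2 ^ n"
proof -
  have c: "coeff (cheb_U n :: 'a poly) n = 2 ^ n" using cheb_U_bound[where 'a='a, of n] by simp
  have "coeff (cheb_U n :: 'a poly) n \<noteq> 0" using c assms by simp
  hence "n \<le> degree (cheb_U n :: 'a poly)" by (rule le_degree)
  thus d: "degree (cheb_U n :: 'a poly) = n" using cheb_U_bound[where 'a='a, of n] by linarith
  show "lead_coeff (cheb_U n :: 'a poly) = 2 ^ n" using c d by simp
qed

lemma prod_lin_monic:
  fixes S :: "'a::idom set"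
  assumes "finite S"
  shows "degree (\<Prod>b\<in>S. [:-b, 1:]) = card S \<and> lead_coeff (\<Prod>b\<in>S. [:-b, 1:]) = 1"
  using assms
proof (induction S rule: finite_induct)
  case empty thus ?case by simp
next
  case (insert x F)
  have nz: "(\<Prod>b\<in>F. [:-b, 1::'a:]) \<noteq> 0" using insert by auto
  define P where "P = (\<Prod>b\<in>F. [:-b, 1::'a:])"
  have e: "(\<Prod>b\<in>insert x F. [:-b, 1::'a:]) = [:-x, 1:] * P" unfolding P_def by (rule prod.insert[OF insert(1,2)])
  have d: "degree ([:-x,1::'a:] * P) = degree [:-x,1::'a:] + degree P" by (rule degree_mult_eq) (auto simp: nz P_def)
  have l: "lead_coeff ([:-x,1::'a:] * P) = lead_coeff [:-x,1::'a:] * lead_coeff P" by (rule lead_coeff_mult)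
  have d1: "degree [:-x,1::'a:] = 1" by simp
  have l1: "lead_coeff [:-x,1::'a:] = 1" by simp
  have IH: "degree P = card F" "lead_coeff P = 1" using insert.IH unfolding P_def by auto
  have A1: "degree ([:-x,1::'a:] * P) = card (insert x F)" using d d1 IH insert(1,2) by simp
  have A2: "lead_coeff ([:-x,1::'a:] * P) = 1" by (simp only: l l1 IH(2) mult_1)
  show ?case unfolding e using A1 A2 by blast
qed

lemma poly_eq_prod_roots:
  fixes P :: "'a::idom poly"
  assumes fin: "finite S" and card: "card S = degree P" and roots: "\<And>b. b \<in> S \<Longrightarrow> poly P b = 0"
    and P0: "P \<noteq> 0"
  shows "P = smult (lead_coeff P) (\<Prod>b\<in>S. [:-b, 1:])"
proof (rule ccontr)
  assume ne: "P \<noteq> smult (lead_coeff P) (\<Prod>b\<in>S. [:-b, 1:])"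
  define Q where "Q = (\<Prod>b\<in>S. [:-b, 1::'a:])"
  define R where "R = P - smult (lead_coeff P) Q"
  define n where "n = degree P"
  have Q: "degree Q = n" "lead_coeff Q = 1" using prod_lin_monic[OF fin] card unfolding Q_def n_def by auto
  have R0: "R \<noteq> 0" using ne unfolding R_def Q_def by simp
  have dR: "degree R \<le> n" unfolding R_def using Q
    by (metis degree_diff_le degree_smult_le le_refl n_def)
  have cR: "coeff R n = 0" unfolding R_def using Q by (simp add: n_def)
  have "degree R \<noteq> n" using R0 cR by (metis leading_coeff_0_iff)
  hence dR': "degree R < n" using dR by simp
  have "S \<subseteq> {x. poly R x = 0}"
  proof
    fix b assume b: "b \<in> S"
    have "poly Q b = 0" unfolding Q_def using fin b by (auto simp: poly_prod)
    thus "b \<in> {x. poly R x = 0}" using roots[OF b] by (simp add: R_def)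
  qed
  hence "card S \<le> card {x. poly R x = 0}" by (intro card_mono poly_roots_finite R0)
  also have "\<dots> \<le> degree R" by (rule card_poly_roots_bound[OF R0])
  finally show False using dR' card n_def by simp
qed

lemma poly_T_rec: "poly (cheb_T (Suc (Suc n))) x = 2 * x * poly (cheb_T (Suc n)) x - poly (cheb_T n) (x::'a::comm_ring_1)"
  by simp
lemma poly_U_rec: "poly (cheb_U (Suc (Suc n))) x = 2 * x * poly (cheb_U (Suc n)) x - poly (cheb_U n) (x::'a::comm_ring_1)"
  by simp



lemma cong_cancel:
  fixes a x y a' f :: "'a::field poly"
  assumes "[a * x = a * y] (mod f)" "[a * a' = 1] (mod f)"
  shows "[x = y] (mod f)"
proof -
  have "[a' * (a * x) = a' * (a * y)] (mod f)" using assms(1) by (rule cong_scalar_left)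
  hence 1: "[(a * a') * x = (a * a') * y] (mod f)" by (simp add: ac_simps)
  have 2: "[(a * a') * x = 1 * x] (mod f)" using assms(2) by (rule cong_scalar_right)
  have 3: "[(a * a') * y = 1 * y] (mod f)" using assms(2) by (rule cong_scalar_right)
  from 2 have "[x = (a * a') * x] (mod f)" by (simp add: cong_sym)
  from cong_trans[OF cong_trans[OF this 1] 3] show ?thesis by simp
qed

lemma cong_const_zero:
  fixes f :: "'a::field poly"
  assumes "degree f \<ge> 1" "[[:c:] = 0] (mod f)"
  shows "c = 0"
proof (rule ccontr)
  assume c: "c \<noteq> 0"
  have "f dvd [:c:]" using assms(2) by (simp add: cong_0_iff)
  hence "degree f \<le> degree [:c:]" using c by (intro dvd_imp_degree_le) auto
  thus False using assms(1) by simp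
qed

lemma cheb_z_step:
  fixes z w f :: "'a::field poly"
  assumes "[z * w = 1] (mod f)"
  shows "[(z + w) * (z ^ Suc n + w ^ Suc n) - (z ^ n + w ^ n) = z ^ Suc (Suc n) + w ^ Suc (Suc n)] (mod f)"
    and "[(z + w) * (z ^ Suc (Suc n) - w ^ Suc (Suc n)) - (z ^ Suc n - w ^ Suc n) = z ^ Suc (Suc (Suc n)) - w ^ Suc (Suc (Suc n))] (mod f)"
proof -
  have dv: "f dvd (z * w - 1)" using assms by (simp add: cong_iff_dvd_diff)
  have "(z + w) * (z ^ Suc n + w ^ Suc n) - (z ^ n + w ^ n) - (z ^ Suc (Suc n) + w ^ Suc (Suc n))
      = (z * w - 1) * (z ^ n + w ^ n)" by (simp add: algebra_simps)
  hence "f dvd ((z + w) * (z ^ Suc n + w ^ Suc n) - (z ^ n + w ^ n) - (z ^ Suc (Suc n) + w ^ Suc (Suc n)))"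
    using dv by simp
  thus "[(z + w) * (z ^ Suc n + w ^ Suc n) - (z ^ n + w ^ n) = z ^ Suc (Suc n) + w ^ Suc (Suc n)] (mod f)"
    by (simp add: cong_iff_dvd_diff)
  have "(z + w) * (z ^ Suc (Suc n) - w ^ Suc (Suc n)) - (z ^ Suc n - w ^ Suc n) - (z ^ Suc (Suc (Suc n)) - w ^ Suc (Suc (Suc n)))
      = (z * w - 1) * (z ^ Suc n - w ^ Suc n)" by (simp add: algebra_simps)
  hence "f dvd ((z + w) * (z ^ Suc (Suc n) - w ^ Suc (Suc n)) - (z ^ Suc n - w ^ Suc n) - (z ^ Suc (Suc (Suc n)) - w ^ Suc (Suc (Suc n))))"
    using dv by simp
  thus "[(z + w) * (z ^ Suc (Suc n) - w ^ Suc (Suc n)) - (z ^ Suc n - w ^ Suc n) = z ^ Suc (Suc (Suc n)) - w ^ Suc (Suc (Suc n))] (mod f)"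
    by (simp add: cong_iff_dvd_diff)
qed

lemma cheb_z:
  fixes z w f :: "'a::field poly" and b :: 'a
  assumes zw: "[z * w = 1] (mod f)" and s: "z + w = [:2 * b:]"
  shows "[[:2 * poly (cheb_T n) b:] = z ^ n + w ^ n] (mod f) \<and>
         [(z - w) * [:poly (cheb_U n) b:] = z ^ Suc n - w ^ Suc n] (mod f)"
proof (induction n rule: cheb_T.induct)
  case 1
  have "[:2::'a:] = 2" by (simp add: numeral_poly)
  thus ?case by simp
next
  case 2
  have U1: "(z - w) * [:poly (cheb_U (Suc 0)) b:] = z ^ Suc (Suc 0) - w ^ Suc (Suc 0)"
  proof -
    have "[:poly (cheb_U (Suc 0)) b:] = z + w" using s by simp
    thus ?thesis by (simp add: algebra_simps)
  qed
  have T1: "[:2 * poly (cheb_T (Suc 0)) b:] = z ^ Suc 0 + w ^ Suc 0" using s by simp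
  show ?case by (simp only: T1 U1 cong_refl simp_thms)
next
  case (3 n)
  have eT: "[:2 * poly (cheb_T (Suc (Suc n))) b:] = (z + w) * [:2 * poly (cheb_T (Suc n)) b:] - [:2 * poly (cheb_T n) b:]"
    unfolding s by (simp add: algebra_simps)
  have "[(z + w) * [:2 * poly (cheb_T (Suc n)) b:] - [:2 * poly (cheb_T n) b:]
        = (z + w) * (z ^ Suc n + w ^ Suc n) - (z ^ n + w ^ n)] (mod f)"
    using 3 by (intro cong_diff cong_scalar_left) auto
  from cong_trans[OF this cheb_z_step(1)[OF zw]] have T: "[[:2 * poly (cheb_T (Suc (Suc n))) b:] = z ^ Suc (Suc n) + w ^ Suc (Suc n)] (mod f)"
    unfolding eT .
  have e1: "[:poly (cheb_U (Suc (Suc n))) b:] = (z + w) * [:poly (cheb_U (Suc n)) b:] - [:poly (cheb_U n) b:]"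
    unfolding s by (simp add: algebra_simps)
  have eU: "(z - w) * [:poly (cheb_U (Suc (Suc n))) b:] = (z + w) * ((z - w) * [:poly (cheb_U (Suc n)) b:]) - (z - w) * [:poly (cheb_U n) b:]"
    unfolding e1 by (simp add: algebra_simps)
  have "[(z + w) * ((z - w) * [:poly (cheb_U (Suc n)) b:]) - (z - w) * [:poly (cheb_U n) b:]
        = (z + w) * (z ^ Suc (Suc n) - w ^ Suc (Suc n)) - (z ^ Suc n - w ^ Suc n)] (mod f)"
    using 3 by (intro cong_diff cong_scalar_left) auto
  from cong_trans[OF this cheb_z_step(2)[OF zw]] have U: "[(z - w) * [:poly (cheb_U (Suc (Suc n))) b:] = z ^ Suc (Suc (Suc n)) - w ^ Suc (Suc (Suc n))] (mod f)"
    unfolding eU .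
  show ?case using T U by blast
qed



lemma key:
  fixes b :: "'a::{field,finite}"
  assumes q: "odd (card (UNIV::'a set))" and d0: "b ^ 2 - 1 \<noteq> 0"
  defines "k \<equiv> (card (UNIV::'a set) - 1) div 2"
  shows "leg (b ^ 2 - 1) = 1 \<Longrightarrow> poly (cheb_U (k - 1)) b = 0"
    and "leg (b ^ 2 - 1) = -1 \<Longrightarrow> poly (cheb_U k) b = 0"
    and "leg (b ^ 2 - 1) = 1 \<Longrightarrow> 2 * j = k \<Longrightarrow> leg (2 * (1 + b)) = -1 \<Longrightarrow> poly (cheb_T j) b = 0"
    and "leg (b ^ 2 - 1) = 1 \<Longrightarrow> 2 * j = k \<Longrightarrow> leg (2 * (1 + b)) = 1 \<Longrightarrow> poly (cheb_U (j - 1)) b = 0"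
    and "leg (b ^ 2 - 1) = -1 \<Longrightarrow> 2 * j = k + 1 \<Longrightarrow> leg (2 * (1 + b)) = -1 \<Longrightarrow> poly (cheb_T j) b = 0"
    and "leg (b ^ 2 - 1) = -1 \<Longrightarrow> 2 * j = k + 1 \<Longrightarrow> leg (2 * (1 + b)) = 1 \<Longrightarrow> poly (cheb_U (j - 1)) b = 0"
proof -
  define Q where "Q = card (UNIV::'a set)"
  have Q3: "Q \<ge> 3" using card_ge3[OF q] unfolding Q_def .
  have Qk: "Q = Suc (2 * k)" using q unfolding k_def Q_def by presburger
  have k1: "k \<ge> 1" using Q3 Qk by linarith
  define d where "d = b ^ 2 - 1"
  have dnz: "d \<noteq> 0" using d0 unfolding d_def .
  define e where "e = leg d"
  define f :: "'a poly" where "f = [:1, -2*b, 1:]"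
  define z :: "'a poly" where "z = [:0, 1:]"
  define w :: "'a poly" where "w = [:2*b, -1:]"
  define s :: "'a poly" where "s = [:-b, 1:]"
  have two: "(2::'a) \<noteq> 0" by (rule two_nz[OF q])
  have degf: "degree f \<ge> 1" unfolding f_def by simp
  have zw: "[z * w = 1] (mod f)"
  proof -
    have "z * w - 1 = - f" unfolding z_def w_def f_def by (simp add: one_pCons)
    thus ?thesis by (simp add: cong_iff_dvd_diff)
  qed
  have sz: "z + w = [:2 * b:]" unfolding z_def w_def by simp
  have ss_eq: "s * s = f + [:d:]" unfolding s_def f_def d_def by (simp add: power2_eq_square algebra_simps)
  have ss: "[s * s = [:d:]] (mod f)" unfolding ss_eq by (simp add: cong_iff_dvd_diff)
  have zmw: "z - w = smult 2 s" unfolding z_def w_def s_def by simp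
  have zmw_inv: "[(z - w) * (s * [:inverse (2 * d):]) = 1] (mod f)"
  proof -
    have "(z - w) * (s * [:inverse (2 * d):]) = (s * s) * [:2 * inverse (2 * d):]"
      unfolding zmw by (simp add: algebra_simps)
    also have "\<dots> = f * [:2 * inverse (2 * d):] + 1" unfolding ss_eq using two dnz
      by (simp add: smult_add_right one_pCons add.commute)
    finally have "(z - w) * (s * [:inverse (2 * d):]) - 1 = f * [:2 * inverse (2 * d):]"
      by (metis add_diff_cancel_right')
    thus ?thesis unfolding cong_iff_dvd_diff by (metis dvd_triv_left)
  qed
  have zpow_inv: "[z ^ n * w ^ n = 1] (mod f)" for n
  proof -
    have "[(z * w) ^ n = 1 ^ n] (mod f)" by (rule cong_pow[OF zw])
    thus ?thesis by (simp add: power_mult_distrib)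
  qed
  have RU: "poly (cheb_U (j - 1)) b = 0" if "[z ^ (2 * j) = 1] (mod f)" "j \<ge> 1" for j
  proof -
    have jj: "Suc (j - 1) = j" using that(2) by simp
    have A: "[(z - w) * [:poly (cheb_U (j - 1)) b:] = z ^ j - w ^ j] (mod f)"
      using cheb_z[OF zw sz, of "j - 1"] jj by simp
    have B: "[z ^ j * ((z - w) * [:poly (cheb_U (j - 1)) b:]) = z ^ j * (z ^ j - w ^ j)] (mod f)"
      using A by (rule cong_scalar_left)
    have p2: "z ^ (2 * j) = z ^ j * z ^ j" by (simp only: mult_2 power_add)
    have "z ^ j * (z ^ j - w ^ j) = z ^ (2 * j) - z ^ j * w ^ j" unfolding p2 by (simp add: right_diff_distrib)
    moreover have "[z ^ (2 * j) - z ^ j * w ^ j = 1 - 1] (mod f)" by (intro cong_diff that(1) zpow_inv)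
    ultimately have "[z ^ j * (z ^ j - w ^ j) = z ^ j * 0] (mod f)" by simp
    from cong_trans[OF B this] have "[z ^ j * ((z - w) * [:poly (cheb_U (j - 1)) b:]) = z ^ j * 0] (mod f)" .
    from cong_cancel[OF this zpow_inv] have "[(z - w) * [:poly (cheb_U (j - 1)) b:] = (z - w) * 0] (mod f)" by simp
    from cong_cancel[OF this zmw_inv] have "[[:poly (cheb_U (j - 1)) b:] = 0] (mod f)" .
    thus ?thesis using cong_const_zero[OF degf] by blast
  qed
  have RT: "poly (cheb_T j) b = 0" if "[z ^ (2 * j) = -1] (mod f)" for j
  proof -
    have A: "[[:2 * poly (cheb_T j) b:] = z ^ j + w ^ j] (mod f)"
      using cheb_z[OF zw sz, of j] by simp
    have B: "[z ^ j * [:2 * poly (cheb_T j) b:] = z ^ j * (z ^ j + w ^ j)] (mod f)"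
      using A by (rule cong_scalar_left)
    have p2: "z ^ (2 * j) = z ^ j * z ^ j" by (simp only: mult_2 power_add)
    have "z ^ j * (z ^ j + w ^ j) = z ^ (2 * j) + z ^ j * w ^ j" unfolding p2 by (simp add: distrib_left)
    moreover have "[z ^ (2 * j) + z ^ j * w ^ j = -1 + 1] (mod f)" by (intro cong_add that(1) zpow_inv)
    ultimately have "[z ^ j * (z ^ j + w ^ j) = z ^ j * 0] (mod f)" by simp
    from cong_trans[OF B this] have "[z ^ j * [:2 * poly (cheb_T j) b:] = z ^ j * 0] (mod f)" .
    from cong_cancel[OF this zpow_inv] have "[[:2 * poly (cheb_T j) b:] = 0] (mod f)" .
    hence "2 * poly (cheb_T j) b = 0" using cong_const_zero[OF degf] by blast
    thus ?thesis using two by simp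
  qed
  have frobQ: "(x + y) ^ Q = x ^ Q + y ^ Q" for x y :: "'a poly" unfolding Q_def by (rule frob_poly)
  have sQ: "s ^ Q = z ^ Q - [:b:]"
  proof -
    have "s = z + - [:b:]" unfolding s_def z_def by simp
    hence "s ^ Q = z ^ Q + (- [:b:]) ^ Q" using frobQ by simp
    also have "(- [:b:]) ^ Q = - ([:b:] ^ Q)" unfolding Q_def by (rule frob_neg)
    also have "[:b:] ^ Q = [:b:]" unfolding Q_def by (rule frob_const)
    finally show ?thesis by simp
  qed
  have pow_split: "x ^ Q = x * (x * x) ^ k" for x :: "'a poly"
    unfolding Qk by (simp only: power_Suc power_mult power2_eq_square)
  have eul: "d ^ k = of_int e" using euler[OF q, of d] unfolding e_def k_def .
  have cs: "[s ^ Q = s * [:of_int e:]] (mod f)"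
  proof -
    have "[(s * s) ^ k = [:d:] ^ k] (mod f)" by (rule cong_pow[OF ss])
    hence "[s * (s * s) ^ k = s * [:d:] ^ k] (mod f)" by (rule cong_scalar_left)
    thus ?thesis unfolding pow_split[symmetric] by (simp add: poly_const_pow eul)
  qed
  have zQ: "[z ^ Q = [:b:] + s * [:of_int e:]] (mod f)"
  proof -
    have "[z ^ Q - [:b:] + [:b:] = s * [:of_int e:] + [:b:]] (mod f)"
      using cs unfolding sQ by (intro cong_add) auto
    thus ?thesis by (simp add: add.commute)
  qed
  have zQ1: "[z ^ Q = z] (mod f)" if "e = 1"
  proof -
    have "[:b:] + s * [:of_int e:] = z" using that unfolding s_def z_def by simp
    thus ?thesis using zQ by simp
  qed
  have zQ2: "[z ^ Q = w] (mod f)" if "e = -1"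
  proof -
    have "[:b:] + s * [:of_int e:] = w" using that unfolding s_def w_def by simp
    thus ?thesis using zQ by simp
  qed
  define c where "c = (of_int (leg (2 * (1 + b))) :: 'a)"
  have b1: "1 + b \<noteq> 0"
  proof
    assume "1 + b = 0"
    hence "b = -1" by (simp add: add_eq_0_iff)
    thus False using d0 by simp
  qed
  have twob: "2 * (1 + b) \<noteq> 0" using two b1 mult_eq_0_iff by blast
  have c2: "c * c = 1" using leg_vals[of "2 * (1 + b)"] twob unfolding c_def
    by (auto simp: leg_zero_iff)
  define p1 where "p1 = z + 1"
  have pp_eq: "p1 * p1 = f + [:2 * (1 + b):] * z"
    unfolding p1_def z_def f_def by (simp add: one_pCons algebra_simps)
  have pp: "[p1 * p1 = [:2 * (1 + b):] * z] (mod f)" unfolding pp_eq by (simp add: cong_iff_dvd_diff)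
  have p1Q: "p1 ^ Q = z ^ Q + 1" unfolding p1_def frobQ by simp
  have p1Q2: "[p1 ^ Q = p1 * ([:c:] * z ^ k)] (mod f)"
  proof -
    have "[(p1 * p1) ^ k = ([:2 * (1 + b):] * z) ^ k] (mod f)" by (rule cong_pow[OF pp])
    hence "[p1 * (p1 * p1) ^ k = p1 * ([:2 * (1 + b):] * z) ^ k] (mod f)" by (rule cong_scalar_left)
    moreover have "([:2 * (1 + b):] * z) ^ k = [:c:] * z ^ k"
    proof -
      have "([:2 * (1 + b):] * z) ^ k = [:(2 * (1 + b)) ^ k:] * z ^ k"
        by (simp only: power_mult_distrib poly_const_pow)
      moreover have "(2 * (1 + b)) ^ k = c"
        using euler[OF q, of "2 * (1 + b)"] unfolding c_def k_def by simp
      ultimately show ?thesis by simp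
    qed
    ultimately show ?thesis unfolding pow_split[symmetric] by simp
  qed
  have p1_inv: "[p1 * (p1 * w * [:inverse (2 * (1 + b)):]) = 1] (mod f)"
  proof -
    have "[(p1 * p1) * (w * [:inverse (2 * (1 + b)):]) = ([:2 * (1 + b):] * z) * (w * [:inverse (2 * (1 + b)):])] (mod f)"
      using pp by (rule cong_scalar_right)
    moreover have "([:2 * (1 + b):] * z) * (w * [:inverse (2 * (1 + b)):]) = z * w"
    proof -
      have "([:2 * (1 + b):] * z) * (w * [:inverse (2 * (1 + b)):]) = ([:2 * (1 + b):] * [:inverse (2 * (1 + b)):]) * (z * w)"
        by (simp only: ac_simps)
      moreover have "[:2 * (1 + b):] * [:inverse (2 * (1 + b)):] = 1"
        using twob by (simp add: one_pCons)
      ultimately show ?thesis by (simp only: mult_1)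
    qed
    ultimately have "[(p1 * p1) * (w * [:inverse (2 * (1 + b)):]) = z * w] (mod f)" by simp
    from cong_trans[OF this zw] show ?thesis by (simp add: ac_simps)
  qed
  have Z1: "[z ^ (2 * k) = 1] (mod f)" if "e = 1"
  proof -
    have "z * z ^ (2 * k) = z ^ Q" unfolding Qk by simp
    hence "[z * z ^ (2 * k) = z * 1] (mod f)" using zQ1[OF that] by simp
    from cong_cancel[OF this zw] show ?thesis .
  qed
  have Z2: "[z ^ (2 * (k + 1)) = 1] (mod f)" if "e = -1"
  proof -
    have e: "z ^ (2 * (k + 1)) = z ^ Q * z" unfolding Qk by (simp add: ac_simps)
    have A: "[z ^ Q * z = w * z] (mod f)" using zQ2[OF that] by (rule cong_scalar_right)
    have B: "[w * z = 1] (mod f)" using zw by (simp add: mult.commute)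
    show ?thesis unfolding e using cong_trans[OF A B] .
  qed
  have ccong: "[z ^ n = [:c:]] (mod f)" if "[[:c:] * z ^ n = 1] (mod f)" for n
  proof -
    have "[[:c:] * ([:c:] * z ^ n) = [:c:] * 1] (mod f)" using that by (rule cong_scalar_left)
    moreover have "[:c:] * ([:c:] * z ^ n) = z ^ n" using c2 by (simp add: mult.assoc[symmetric])
    ultimately show ?thesis by simp
  qed
  have Z3: "[z ^ k = [:c:]] (mod f)" if "e = 1"
  proof -
    have "[z ^ Q + 1 = z + 1] (mod f)" using zQ1[OF that] by (intro cong_add) auto
    hence "[p1 ^ Q = p1 * 1] (mod f)" unfolding p1Q by (simp add: p1_def)
    from cong_trans[OF cong_sym[OF p1Q2] this] have "[p1 * ([:c:] * z ^ k) = p1 * 1] (mod f)" .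
    from cong_cancel[OF this p1_inv] show ?thesis by (intro ccong)
  qed
  have Z4: "[z ^ (k + 1) = [:c:]] (mod f)" if "e = -1"
  proof -
    have "[z ^ Q + 1 = w + 1] (mod f)" using zQ2[OF that] by (intro cong_add) auto
    from cong_trans[OF cong_sym[OF p1Q2] this[folded p1Q]] have "[p1 * ([:c:] * z ^ k) = w + 1] (mod f)" .
    hence A: "[z * (p1 * ([:c:] * z ^ k)) = z * (w + 1)] (mod f)" by (rule cong_scalar_left)
    have "[z * w + z = 1 + z] (mod f)" using zw by (intro cong_add) auto
    hence "[z * (w + 1) = p1 * 1] (mod f)" unfolding p1_def by (simp add: algebra_simps)
    from cong_trans[OF A this] have "[p1 * ([:c:] * z ^ (k + 1)) = p1 * 1] (mod f)" by (simp add: ac_simps)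
    from cong_cancel[OF this p1_inv] show ?thesis by (intro ccong)
  qed
  show "leg (b ^ 2 - 1) = 1 \<Longrightarrow> poly (cheb_U (k - 1)) b = 0"
    using RU[OF Z1 k1] unfolding e_def d_def by simp
  show "leg (b ^ 2 - 1) = -1 \<Longrightarrow> poly (cheb_U k) b = 0"
    using RU[OF Z2] unfolding e_def d_def by simp
  show "leg (b ^ 2 - 1) = 1 \<Longrightarrow> 2 * j = k \<Longrightarrow> leg (2 * (1 + b)) = -1 \<Longrightarrow> poly (cheb_T j) b = 0"
  proof -
    assume a: "leg (b ^ 2 - 1) = 1" "2 * j = k" "leg (2 * (1 + b)) = -1"
    have "[z ^ (2 * j) = [:c:]] (mod f)" using Z3 a unfolding e_def d_def by simp
    moreover have "[:c:] = -1" using a(3) unfolding c_def by (simp add: one_pCons)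
    ultimately show ?thesis using RT by simp
  qed
  show "leg (b ^ 2 - 1) = 1 \<Longrightarrow> 2 * j = k \<Longrightarrow> leg (2 * (1 + b)) = 1 \<Longrightarrow> poly (cheb_U (j - 1)) b = 0"
  proof -
    assume a: "leg (b ^ 2 - 1) = 1" "2 * j = k" "leg (2 * (1 + b)) = 1"
    have "[z ^ (2 * j) = [:c:]] (mod f)" using Z3 a unfolding e_def d_def by simp
    moreover have "[:c:] = 1" using a(3) unfolding c_def by (simp add: one_pCons)
    moreover have "j \<ge> 1" using a(2) k1 by linarith
    ultimately show ?thesis using RU by simp
  qed
  show "leg (b ^ 2 - 1) = -1 \<Longrightarrow> 2 * j = k + 1 \<Longrightarrow> leg (2 * (1 + b)) = -1 \<Longrightarrow> poly (cheb_T j) b = 0"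
  proof -
    assume a: "leg (b ^ 2 - 1) = -1" "2 * j = k + 1" "leg (2 * (1 + b)) = -1"
    have "[z ^ (2 * j) = [:c:]] (mod f)" using Z4 a unfolding e_def d_def by simp
    moreover have "[:c:] = -1" using a(3) unfolding c_def by (simp add: one_pCons)
    ultimately show ?thesis using RT by simp
  qed
  show "leg (b ^ 2 - 1) = -1 \<Longrightarrow> 2 * j = k + 1 \<Longrightarrow> leg (2 * (1 + b)) = 1 \<Longrightarrow> poly (cheb_U (j - 1)) b = 0"
  proof -
    assume a: "leg (b ^ 2 - 1) = -1" "2 * j = k + 1" "leg (2 * (1 + b)) = 1"
    have "[z ^ (2 * j) = [:c:]] (mod f)" using Z4 a unfolding e_def d_def by simp
    moreover have "[:c:] = 1" using a(3) unfolding c_def by (simp add: one_pCons)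
    moreover have "j \<ge> 1" using a(2) by linarith
    ultimately show ?thesis using RU by simp
  qed
qed



lemma poly_two_pow: "(2::'a::comm_ring_1 poly) ^ n = [:2 ^ n:]"
  by (simp add: numeral_poly poly_const_pow)

lemma cheb_U_nz: "(2::'a::idom) \<noteq> 0 \<Longrightarrow> (cheb_U n :: 'a poly) \<noteq> 0"
  using cheb_U_deg(2)[of n] by (metis leading_coeff_0_iff power_not_zero)

lemma cheb_T_nz: "(2::'a::idom) \<noteq> 0 \<Longrightarrow> n \<ge> 1 \<Longrightarrow> (cheb_T n :: 'a poly) \<noteq> 0"
  using cheb_T_deg(2)[of n] by (metis leading_coeff_0_iff power_not_zero)

lemma roots_card_le:
  fixes P :: "'a::idom poly"
  assumes "P \<noteq> 0" "\<And>b. b \<in> S \<Longrightarrow> poly P b = 0"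
  shows "card S \<le> degree P"
proof -
  have "S \<subseteq> {x. poly P x = 0}" using assms(2) by auto
  hence "card S \<le> card {x. poly P x = 0}" by (intro card_mono poly_roots_finite assms(1))
  also have "\<dots> \<le> degree P" by (rule card_poly_roots_bound[OF assms(1)])
  finally show ?thesis .
qed

theorem theorem9p3:
  fixes q :: nat and \<epsilon> \<nu> :: int and m :: nat
  assumes "card (UNIV :: 'a set) = q"
    and "odd q"
    and "\<epsilon> = leg (-1 :: 'a::{field,finite})"
    and "\<nu> = leg (2 :: 'a)"
    and "int m = (int q - \<epsilon>) div 4"
  shows "(cheb_T m :: 'a poly) = 2 ^ (m - 1) * (\<Prod>b\<in>Bset (1::'a) (-\<nu>) (-\<nu>). [:-b, 1:])
       \<and> (cheb_U (m - 1) :: 'a poly) = 2 ^ (m - 1) * (\<Prod>b\<in>Bset (1::'a) \<nu> \<nu>. [:-b, 1:])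
       \<and> (cheb_U ((q - 3) div 2) :: 'a poly)
            = 2 ^ ((q - 3) div 2) * (\<Prod>b\<in>{b::'a. leg (b ^ 2 - 1) = 1}. [:-b, 1:])
       \<and> (cheb_U ((q - 1) div 2) :: 'a poly)
            = 2 ^ ((q - 1) div 2) * (\<Prod>b\<in>{b::'a. leg (b ^ 2 - 1) = -1}. [:-b, 1:])"
proof -
  note qd = assms(1)
  have oq: "odd (card (UNIV::'a set))" using assms(1,2) by simp
  have two: "(2::'a) \<noteq> 0" by (rule two_nz[OF oq])
  have one_m1: "(1::'a) \<noteq> -1" by (rule one_neq_mone[OF oq])
  define k where "k = (q - 1) div 2"
  have q3: "q \<ge> 3" using card_ge3[OF oq] qd by simp
  have qk: "q = Suc (2 * k)" using assms(2) unfolding k_def by presburger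
  have k1: "k \<ge> 1" using q3 qk by linarith
  have km: "(q - 3) div 2 = k - 1" "(q - 1) div 2 = k" using qk by auto
  have keyk: "k = (card (UNIV::'a set) - 1) div 2" using qd k_def by simp
  define S1 where "S1 = {b::'a. leg (b ^ 2 - 1) = 1}"
  define S2 where "S2 = {b::'a. leg (b ^ 2 - 1) = -1}"
  have nz_of: "b ^ 2 - 1 \<noteq> 0" if "leg (b ^ 2 - 1) \<noteq> 0" for b :: 'a
    using that by (auto simp: leg_zero_iff)
  have rS1: "poly (cheb_U (k - 1)) b = 0" if "b \<in> S1" for b
    using key(1)[OF oq nz_of, of b] that unfolding S1_def keyk by simp
  have rS2: "poly (cheb_U k) b = 0" if "b \<in> S2" for b
    using key(2)[OF oq nz_of, of b] that unfolding S2_def keyk by simp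
  have c1: "card S1 \<le> k - 1" using roots_card_le[OF cheb_U_nz[OF two] rS1] cheb_U_deg(1)[OF two] by simp
  have c2: "card S2 \<le> k" using roots_card_le[OF cheb_U_nz[OF two] rS2] cheb_U_deg(1)[OF two] by simp
  have un: "S1 \<union> S2 = UNIV - {1, -1}"
  proof (rule set_eqI)
    fix b :: 'a
    have z: "leg (b ^ 2 - 1) = 0 \<longleftrightarrow> b = 1 \<or> b = -1"
      by (simp add: leg_zero_iff power2_eq_1_iff)
    have v: "leg (b ^ 2 - 1) \<in> {-1, 0, 1}" by (rule leg_vals)
    show "b \<in> S1 \<union> S2 \<longleftrightarrow> b \<in> UNIV - {1, -1}"
      using z v unfolding S1_def S2_def by auto
  qed
  have dis: "S1 \<inter> S2 = {}" unfolding S1_def S2_def by auto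
  have "card (S1 \<union> S2) = q - 2" unfolding un using one_m1 qd
    by (simp add: card_Diff_subset)
  hence "card S1 + card S2 = q - 2" using dis by (simp add: card_Un_disjoint)
  hence cS1: "card S1 = k - 1" and cS2: "card S2 = k" using c1 c2 qk by linarith+
  have smult2: "smult (2 ^ n) X = (2::'a poly) ^ n * X" for n X by (simp add: poly_two_pow)
  have U1: "(cheb_U (k - 1) :: 'a poly) = 2 ^ (k - 1) * (\<Prod>b\<in>S1. [:-b, 1:])"
  proof -
    have "(cheb_U (k - 1) :: 'a poly) = smult (lead_coeff (cheb_U (k - 1))) (\<Prod>b\<in>S1. [:-b, 1:])"
      by (rule poly_eq_prod_roots[OF finite _ rS1 cheb_U_nz[OF two]]) (simp only: cS1 cheb_U_deg(1)[OF two])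
    thus ?thesis by (simp only: cheb_U_deg(2)[OF two] smult2)
  qed
  have U2: "(cheb_U k :: 'a poly) = 2 ^ k * (\<Prod>b\<in>S2. [:-b, 1:])"
  proof -
    have "(cheb_U k :: 'a poly) = smult (lead_coeff (cheb_U k)) (\<Prod>b\<in>S2. [:-b, 1:])"
      by (rule poly_eq_prod_roots[OF finite _ rS2 cheb_U_nz[OF two]]) (simp only: cS2 cheb_U_deg(1)[OF two])
    thus ?thesis by (simp only: cheb_U_deg(2)[OF two] smult2)
  qed
  have lv: "leg x \<in> {-1, 1}" if "x \<noteq> 0" for x :: 'a
    using leg_vals[of x] that by (auto simp: leg_zero_iff)
  have epsv: "\<epsilon> \<in> {-1, 1}" unfolding assms(3) by (rule lv) simp
  have nuv: "\<nu> \<in> {-1, 1}" unfolding assms(4) using two by (rule lv)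
  have nn: "\<nu> * \<nu> = 1" using nuv by auto
  have eul: "(-1::'a) ^ k = of_int \<epsilon>" using euler[OF oq, of "-1"] unfolding assms(3) keyk .
  have mk1: "\<epsilon> = 1 \<and> 2 * m = k \<or> \<epsilon> = -1 \<and> 2 * m = k + 1"
  proof (cases "even k")
    case True
    hence "(of_int \<epsilon> :: 'a) = of_int 1" using eul by simp
    hence e1: "\<epsilon> = 1" using of_int_inj3[OF oq, of \<epsilon> 1] epsv by auto
    have "int m = (int q - 1) div 4" using assms(5) e1 by simp
    hence "2 * m = k" using True qk by presburger
    thus ?thesis using e1 by simp
  next
    case False
    hence "(of_int \<epsilon> :: 'a) = of_int (-1)" using eul by simp
    hence e1: "\<epsilon> = -1" using of_int_inj3[OF oq, of \<epsilon> "-1"] epsv by auto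
    have "int m = (int q + 1) div 4" using assms(5) e1 by simp
    hence "2 * m = k + 1" using False qk by presburger
    thus ?thesis using e1 by simp
  qed
  have m1: "m \<ge> 1" using mk1 k1 by linarith
  define B1 where "B1 = Bset (1::'a) (-\<nu>) (-\<nu>)"
  define B2 where "B2 = Bset (1::'a) \<nu> \<nu>"
  have legrel: "leg (b ^ 2 - 1) = \<epsilon> * (leg (1 - b) * leg (1 + b))" for b :: 'a
  proof -
    have "b ^ 2 - 1 = (-1) * ((1 - b) * (1 + b))" by (simp add: power2_eq_square algebra_simps)
    thus ?thesis unfolding assms(3) by (simp only: leg_mult[OF oq])
  qed
  have leg2: "leg (2 * (1 + b)) = \<nu> * leg (1 + b)" for b :: 'a
    unfolding assms(4) by (rule leg_mult[OF oq])
  have e0: "\<epsilon> \<noteq> 0" using epsv by auto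
  have inB: "leg (b ^ 2 - 1) = \<epsilon> \<and> b ^ 2 - 1 \<noteq> 0" if "leg (1 - b) = leg (1 + b)" "leg (1 + b) \<in> {-1, 1}" for b :: 'a
  proof -
    have "leg (1 - b) * leg (1 + b) = 1" using that by auto
    hence "leg (b ^ 2 - 1) = \<epsilon>" using legrel[of b] by simp
    thus ?thesis using e0 nz_of by auto
  qed
  have rB1: "poly (cheb_T m) b = 0" if "b \<in> B1" for b
  proof -
    have a: "leg (1 - b) = -\<nu>" "leg (1 + b) = -\<nu>" using that unfolding B1_def Bset_def by auto
    have i: "leg (b ^ 2 - 1) = \<epsilon>" "b ^ 2 - 1 \<noteq> 0" using inB[of b] a nuv by auto
    have l2: "leg (2 * (1 + b)) = -1" using leg2[of b] a nn by simp
    from mk1 show ?thesis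
    proof
      assume "\<epsilon> = 1 \<and> 2 * m = k"
      thus ?thesis using key(3)[OF oq i(2), of m] i(1) l2 unfolding keyk by auto
    next
      assume "\<epsilon> = -1 \<and> 2 * m = k + 1"
      thus ?thesis using key(5)[OF oq i(2), of m] i(1) l2 unfolding keyk by auto
    qed
  qed
  have rB2: "poly (cheb_U (m - 1)) b = 0" if "b \<in> B2" for b
  proof -
    have a: "leg (1 - b) = \<nu>" "leg (1 + b) = \<nu>" using that unfolding B2_def Bset_def by auto
    have i: "leg (b ^ 2 - 1) = \<epsilon>" "b ^ 2 - 1 \<noteq> 0" using inB[of b] a nuv by auto
    have l2: "leg (2 * (1 + b)) = 1" using leg2[of b] a nn by simp
    from mk1 show ?thesis
    proof
      assume "\<epsilon> = 1 \<and> 2 * m = k"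
      thus ?thesis using key(4)[OF oq i(2), of m] i(1) l2 unfolding keyk by auto
    next
      assume "\<epsilon> = -1 \<and> 2 * m = k + 1"
      thus ?thesis using key(6)[OF oq i(2), of m] i(1) l2 unfolding keyk by auto
    qed
  qed
  have unB: "B1 \<union> B2 = {b. leg (b ^ 2 - 1) = \<epsilon>}"
  proof (rule set_eqI)
    fix b :: 'a
    show "b \<in> B1 \<union> B2 \<longleftrightarrow> b \<in> {b. leg (b ^ 2 - 1) = \<epsilon>}"
    proof
      assume "b \<in> B1 \<union> B2"
      hence "leg (1 - b) = leg (1 + b) \<and> leg (1 + b) \<in> {-1, 1}" unfolding B1_def B2_def Bset_def using nuv by auto
      thus "b \<in> {b. leg (b ^ 2 - 1) = \<epsilon>}" using inB by auto
    next
      assume "b \<in> {b. leg (b ^ 2 - 1) = \<epsilon>}"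
      hence "\<epsilon> * (leg (1 - b) * leg (1 + b)) = \<epsilon>" using legrel[of b] by simp
      hence p: "leg (1 - b) * leg (1 + b) = 1" using e0 by simp
      have "leg (1 - b) \<in> {-1,0,1}" "leg (1 + b) \<in> {-1,0,1}" by (rule leg_vals)+
      hence "leg (1 - b) = leg (1 + b) \<and> leg (1 + b) \<in> {-1, 1}" using p by auto
      thus "b \<in> B1 \<union> B2" unfolding B1_def B2_def Bset_def using nuv by auto
    qed
  qed
  have cunB: "card (B1 \<union> B2) = 2 * m - 1"
    using mk1 cS1 cS2 unfolding unB S1_def S2_def by auto
  have disB: "B1 \<inter> B2 = {}" unfolding B1_def B2_def Bset_def using nuv by auto
  have "card B1 + card B2 = 2 * m - 1" using cunB disB by (simp add: card_Un_disjoint)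
  moreover have "card B1 \<le> m" using roots_card_le[OF cheb_T_nz[OF two m1] rB1] cheb_T_deg(1)[OF two m1] by simp
  moreover have "card B2 \<le> m - 1" using roots_card_le[OF cheb_U_nz[OF two] rB2] cheb_U_deg(1)[OF two] by simp
  ultimately have cB1: "card B1 = m" and cB2: "card B2 = m - 1" using m1 by linarith+
  have T: "(cheb_T m :: 'a poly) = 2 ^ (m - 1) * (\<Prod>b\<in>B1. [:-b, 1:])"
  proof -
    have "(cheb_T m :: 'a poly) = smult (lead_coeff (cheb_T m)) (\<Prod>b\<in>B1. [:-b, 1:])"
      by (rule poly_eq_prod_roots[OF finite _ rB1 cheb_T_nz[OF two m1]]) (simp only: cB1 cheb_T_deg(1)[OF two m1])
    thus ?thesis by (simp only: cheb_T_deg(2)[OF two m1] smult2)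
  qed
  have U: "(cheb_U (m - 1) :: 'a poly) = 2 ^ (m - 1) * (\<Prod>b\<in>B2. [:-b, 1:])"
  proof -
    have "(cheb_U (m - 1) :: 'a poly) = smult (lead_coeff (cheb_U (m - 1))) (\<Prod>b\<in>B2. [:-b, 1:])"
      by (rule poly_eq_prod_roots[OF finite _ rB2 cheb_U_nz[OF two]]) (simp only: cB2 cheb_U_deg(1)[OF two])
    thus ?thesis by (simp only: cheb_U_deg(2)[OF two] smult2)
  qed
  show ?thesis using T U U1 U2 unfolding km B1_def B2_def S1_def S2_def by blast
qed

end
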